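(* Let $\rho_0\in\mathcal P_2(\mathbb R^d)$, $\mathbb H:=L^2(\mathbb R^d;\rho_0)$, and let $\phi:\mathcal P_2(\mathbb R^d)\to\mathbb R$ be such that the lift $\phi^{\#}_{\rho_0}$ is Fréchet differentiable on $\mathbb H$, bounded, with bounded gradient, and with globally Lipschitz gradient, with Lipschitz constant \[L(\phi):=\sup_{\xi_1\neq\xi_2\in\mathbb H}\frac{\|\nabla\phi^{\#}_{\rho_0}(\xi_1)-\nabla\phi^{\#}_{\rho_0}(\xi_2)\|_{\mathbb H}}{\|\xi_1-\xi_2\|_{\mathbb H}}\in(0,\infty).\] Let $X:[0,\infty)\to\mathbb H$ be the unique $C^1$ solution of $\dot X(t)=-\nabla\phi^{\#}_{\rho_0}(X(t))$, $X(0)=\mathrm{Id}$. Fix $T>0$ and $\alpha\in(0,1]$, and assume that $t\mapsto\dot X(t)$ is Fréchet differentiable from $[0,T]$ to $\mathbb H$ with derivative $\ddot X$ and that \[L_\alpha(T,\ddot X):=\sup_{t\neq s\in[0,T]}\frac{\|\dot X(t)-\dot X(s)-(t-s)\ddot X(s)\|_{\mathbb H}}{|t-s|^{1+\alpha}}<\infty.\] Let $0<\tau\le 1/L(\phi)$, let $X_0^\tau\in\mathbb H$, and let $(X_n^\tau)_{n\ge0}$ be the iterates of the Lagrangian trapezoidal scheme (which are well defined and unique under these hypotheses). Then for every $n\in\mathbb N$ with $n\tau\le T$, \[W_2\big((X(n\tau))_{\#}\rho_0,(X_n^\tau)_{\#}\rho_0\big)\le\|X_n^\tau-X(n\tau)\|_{\mathbb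 H}\le e^{2L(\phi)T}\|X_0^\tau-\mathrm{Id}\|_{\mathbb H}+2\frac{L_\alpha(T,\ddot X)}{L(\phi)}\big(e^{2L(\phi)T}-1\big)\tau^{1+\alpha}.\]
   Context: $\mathcal P_2(\mathbb R^d)$ is the set of Borel probability measures on $\mathbb R^d$ with finite second moment and $W_2$ the quadratic Wasserstein distance. For $\rho_0\in\mathcal P_2(\mathbb R^d)$, $\mathbb H=L^2(\mathbb R^d;\rho_0)$ is the Hilbert space of ($\rho_0$-a.e. classes of) Borel maps $\xi:\mathbb R^d\to\mathbb R^d$ with $\int|\xi|^2d\rho_0<\infty$, inner product $\langle\xi_1,\xi_2\rangle_{\mathbb H}=\int\langle\xi_1(x),\xi_2(x)\rangle d\rho_0(x)$; $\mathrm{Id}$ is the identity map. For $\phi:\mathcal P_2(\mathbb R^d)\to\mathbb R$ the lift is $\phi^{\#}_{\rho_0}:\mathbb H\to\mathbb R$, $\phi^{\#}_{\rho_0}(\xi):=\phi(\xi_{\#}\rho_0)$, and $\nabla\phi^{\#}_{\rho_0}(\xi)\in\mathbb H$ denotes its Fréchet gradient. Lagrangian trapezoidal scheme: given $X_0^\tau\in\mathbb H$, for $n\ge0$, \[X_{n+1}^\tau\in\arg\min_{\xi\in\mathbb H}\Big\{\tfrac12\phi^{\#}_{\rho_0}(\xi)+\tfrac12\langle\nabla\phi^{\#}_{\rho_0}(X_n^\tau),\xi\rangle_{\mathbb H}+\tfrac1{2\tau}\|\xi-X_n^\tau\|_{\mathbb H}^2\Big\}.\] *)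

theory Defs
  imports "HOL-Analysis.Analysis" "HOL-Probability.Probability"
begin

definition P2 :: "('a::euclidean_space) measure set" where
  "P2 = {\<mu>. sets \<mu> = sets borel \<and> prob_space \<mu> \<and> (\<integral>\<^sup>+ x. ennreal (norm x ^ 2) \<partial>\<mu>) < \<infinity>}"

definition couplings :: "'a::euclidean_space measure \<Rightarrow> 'a measure \<Rightarrow> ('a \<times> 'a) measure set" where
  "couplings \<mu> \<nu> = {\<pi>. sets \<pi> = sets borel \<and> prob_space \<pi> \<and>
      distr \<pi> borel fst = \<mu> \<and> distr \<pi> borel snd = \<nu>}"

definition W2 :: "'a::euclidean_space measure \<Rightarrow> 'a measure \<Rightarrow> real" where
  "W2 \<mu> \<nu> = sqrt (enn2real (INF \<pi>\<in>couplings \<mu> \<nu>. \<integral>\<^sup>+ p. ennreal (norm (fst p - snd p) ^ 2) \<partial>\<pi>))"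

text \<open>The Hilbert space H = L^2(R^d; rho0) of maps (elements are representatives;
  all notions below only depend on rho0-a.e. classes).\<close>
definition L2space :: "'a::euclidean_space measure \<Rightarrow> ('a \<Rightarrow> 'a) set" where
  "L2space \<rho> = {\<xi>. \<xi> \<in> borel_measurable \<rho> \<and> integrable \<rho> (\<lambda>x. norm (\<xi> x) ^ 2)}"

definition H_inner :: "'a::euclidean_space measure \<Rightarrow> ('a \<Rightarrow> 'a) \<Rightarrow> ('a \<Rightarrow> 'a) \<Rightarrow> real" where
  "H_inner \<rho> \<xi> \<eta> = (\<integral>x. \<xi> x \<bullet> \<eta> x \<partial>\<rho>)"

definition H_norm :: "'a::euclidean_space measure \<Rightarrow> ('a \<Rightarrow> 'a) \<Rightarrow> real" where
  "H_norm \<rho> \<xi> = sqrt (\<integral>x. norm (\<xi> x) ^ 2 \<partial>\<rho>)"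

definition lift :: "'a::euclidean_space measure \<Rightarrow> ('a measure \<Rightarrow> real) \<Rightarrow> ('a \<Rightarrow> 'a) \<Rightarrow> real" where
  "lift \<rho> \<phi> \<xi> = \<phi> (distr \<rho> borel \<xi>)"

definition is_frechet_gradient ::
  "'a::euclidean_space measure \<Rightarrow> ('a measure \<Rightarrow> real) \<Rightarrow> (('a \<Rightarrow> 'a) \<Rightarrow> ('a \<Rightarrow> 'a)) \<Rightarrow> bool" where
  "is_frechet_gradient \<rho> \<phi> G \<longleftrightarrow>
     (\<forall>\<xi>\<in>L2space \<rho>. G \<xi> \<in> L2space \<rho> \<and>
        (\<forall>\<epsilon>>0. \<exists>\<delta>>0. \<forall>\<eta>\<in>L2space \<rho>. H_norm \<rho> (\<lambda>x. \<eta> x - \<xi> x) < \<delta> \<longrightarrow>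
           \<bar>lift \<rho> \<phi> \<eta> - lift \<rho> \<phi> \<xi> - H_inner \<rho> (G \<xi>) (\<lambda>x. \<eta> x - \<xi> x)\<bar>
             \<le> \<epsilon> * H_norm \<rho> (\<lambda>x. \<eta> x - \<xi> x)))"

definition lip_ratios :: "'a::euclidean_space measure \<Rightarrow> (('a \<Rightarrow> 'a) \<Rightarrow> ('a \<Rightarrow> 'a)) \<Rightarrow> real set" where
  "lip_ratios \<rho> G = {H_norm \<rho> (\<lambda>x. G \<xi>1 x - G \<xi>2 x) / H_norm \<rho> (\<lambda>x. \<xi>1 x - \<xi>2 x) | \<xi>1 \<xi>2.
      \<xi>1 \<in> L2space \<rho> \<and> \<xi>2 \<in> L2space \<rho> \<and> H_norm \<rho> (\<lambda>x. \<xi>1 x - \<xi>2 x) \<noteq> 0}"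

definition Lip_const :: "'a::euclidean_space measure \<Rightarrow> (('a \<Rightarrow> 'a) \<Rightarrow> ('a \<Rightarrow> 'a)) \<Rightarrow> real" where
  "Lip_const \<rho> G = Sup (lip_ratios \<rho> G)"

definition has_H_derivative ::
  "'a::euclidean_space measure \<Rightarrow> (real \<Rightarrow> 'a \<Rightarrow> 'a) \<Rightarrow> ('a \<Rightarrow> 'a) \<Rightarrow> real \<Rightarrow> real set \<Rightarrow> bool" where
  "has_H_derivative \<rho> X D t S \<longleftrightarrow>
     (\<forall>\<epsilon>>0. \<exists>\<delta>>0. \<forall>s\<in>S. \<bar>s - t\<bar> < \<delta> \<longrightarrow>
        H_norm \<rho> (\<lambda>x. X s x - X t x - (s - t) *\<^sub>R D x) \<le> \<epsilon> * \<bar>s - t\<bar>)"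

definition H_continuous_at ::
  "'a::euclidean_space measure \<Rightarrow> (real \<Rightarrow> 'a \<Rightarrow> 'a) \<Rightarrow> real \<Rightarrow> real set \<Rightarrow> bool" where
  "H_continuous_at \<rho> X t S \<longleftrightarrow>
     (\<forall>\<epsilon>>0. \<exists>\<delta>>0. \<forall>s\<in>S. \<bar>s - t\<bar> < \<delta> \<longrightarrow> H_norm \<rho> (\<lambda>x. X s x - X t x) \<le> \<epsilon>)"

definition holder_ratios ::
  "'a::euclidean_space measure \<Rightarrow> real \<Rightarrow> real \<Rightarrow> (real \<Rightarrow> 'a \<Rightarrow> 'a) \<Rightarrow> (real \<Rightarrow> 'a \<Rightarrow> 'a) \<Rightarrow> real set" where
  "holder_ratios \<rho> T \<alpha> Xd Xdd =
     {H_norm \<rho> (\<lambda>x. Xd t x - Xd s x - (t - s) *\<^sub>R Xdd s x) / \<bar>t - s\<bar> powr (1 + \<alpha>) | t s.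
        t \<in> {0..T} \<and> s \<in> {0..T} \<and> t \<noteq> s}"

definition L_alpha ::
  "'a::euclidean_space measure \<Rightarrow> real \<Rightarrow> real \<Rightarrow> (real \<Rightarrow> 'a \<Rightarrow> 'a) \<Rightarrow> (real \<Rightarrow> 'a \<Rightarrow> 'a) \<Rightarrow> real" where
  "L_alpha \<rho> T \<alpha> Xd Xdd = Sup (holder_ratios \<rho> T \<alpha> Xd Xdd)"

definition trap_obj ::
  "'a::euclidean_space measure \<Rightarrow> ('a measure \<Rightarrow> real) \<Rightarrow> (('a \<Rightarrow> 'a) \<Rightarrow> ('a \<Rightarrow> 'a)) \<Rightarrow> real
     \<Rightarrow> ('a \<Rightarrow> 'a) \<Rightarrow> ('a \<Rightarrow> 'a) \<Rightarrow> real" where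
  "trap_obj \<rho> \<phi> G \<tau> Y \<xi> =
     lift \<rho> \<phi> \<xi> / 2 + H_inner \<rho> (G Y) \<xi> / 2 + H_norm \<rho> (\<lambda>x. \<xi> x - Y x) ^ 2 / (2 * \<tau>)"

end

theory Submission
  imports Defs
begin

lemma l2_meas: "\<xi> \<in> L2space M \<Longrightarrow> \<xi> \<in> borel_measurable M"
  by (simp add: L2space_def)
lemma l2_int: "\<xi> \<in> L2space M \<Longrightarrow> integrable M (\<lambda>x. norm (\<xi> x) ^ 2)"
  by (simp add: L2space_def)

lemma l2_inner_int:
  assumes "a \<in> L2space M" "b \<in> L2space M"
  shows "integrable M (\<lambda>x. a x \<bullet> b x)"
proof (rule Bochner_Integration.integrable_bound[where f="\<lambda>x. norm (a x) ^ 2 + norm (b x) ^ 2"])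
  show "integrable M (\<lambda>x. norm (a x) ^ 2 + norm (b x) ^ 2)"
    using assms by (intro Bochner_Integration.integrable_add l2_int)
  show "(\<lambda>x. a x \<bullet> b x) \<in> borel_measurable M"
    using assms l2_meas by (intro borel_measurable_inner) auto
  show "AE x in M. norm (a x \<bullet> b x) \<le> norm (norm (a x) ^ 2 + norm (b x) ^ 2)"
  proof (intro AE_I2)
    fix x
    have "\<bar>a x \<bullet> b x\<bar> \<le> norm (a x) * norm (b x)" by (rule Cauchy_Schwarz_ineq2)
    also have "\<dots> \<le> norm (a x) ^ 2 + norm (b x) ^ 2"
      using sum_squares_bound[of "norm (a x)" "norm (b x)"] mult_nonneg_nonneg[OF norm_ge_zero[of "a x"] norm_ge_zero[of "b x"]]
      by linarith
    finally show "norm (a x \<bullet> b x) \<le> norm (norm (a x) ^ 2 + norm (b x) ^ 2)" by simp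
  qed
qed

lemma norm_add_sq: "norm (u + v :: 'a::real_inner) ^ 2 = norm u ^ 2 + 2 * (u \<bullet> v) + norm v ^ 2"
  by (simp add: power2_norm_eq_inner inner_add_left inner_add_right inner_commute)

lemma l2_add: assumes "a \<in> L2space M" "b \<in> L2space M"
  shows "(\<lambda>x. a x + b x) \<in> L2space M"
proof -
  have "integrable M (\<lambda>x. norm (a x) ^ 2 + 2 * (a x \<bullet> b x) + norm (b x) ^ 2)"
    using assms by (intro Bochner_Integration.integrable_add integrable_mult_right l2_inner_int l2_int)
  then show ?thesis using assms unfolding L2space_def by (simp add: norm_add_sq borel_measurable_add)
qed

lemma l2_scale: assumes "a \<in> L2space M" shows "(\<lambda>x. c *\<^sub>R a x) \<in> L2space M"
proof -
  have "integrable M (\<lambda>x. c^2 * norm (a x) ^ 2)"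
    using assms by (intro integrable_mult_right l2_int)
  then show ?thesis using assms unfolding L2space_def
    by (simp add: power_mult_distrib borel_measurable_scaleR)
qed

lemma l2_diff: assumes "a \<in> L2space M" "b \<in> L2space M"
  shows "(\<lambda>x. a x - b x) \<in> L2space M"
  using l2_add[OF assms(1) l2_scale[OF assms(2), of "-1"]] by simp

lemma l2_const: assumes "finite_measure M" shows "(\<lambda>x. v) \<in> L2space M"
  using assms unfolding L2space_def by (simp add: finite_measure.integrable_const)

lemma hn_nonneg: "H_norm M a \<ge> 0"
  unfolding H_norm_def by (simp add: integral_nonneg_AE)

lemma hn_sq: "H_norm M a ^ 2 = (\<integral>x. norm (a x) ^ 2 \<partial>M)"
  unfolding H_norm_def by (simp add: integral_nonneg_AE)

lemma hn_scale: "H_norm M (\<lambda>x. c *\<^sub>R a x) = \<bar>c\<bar> * H_norm M a"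
  unfolding H_norm_def by (simp add: power_mult_distrib real_sqrt_mult)

lemma hi_self: "H_inner M a a = H_norm M a ^ 2"
  unfolding H_inner_def hn_sq by (simp add: power2_norm_eq_inner)

lemma hi_comm: "H_inner M a b = H_inner M b a"
  unfolding H_inner_def by (simp add: inner_commute)

lemma hi_add_left: assumes "a \<in> L2space M" "b \<in> L2space M" "c \<in> L2space M"
  shows "H_inner M (\<lambda>x. a x + b x) c = H_inner M a c + H_inner M b c"
  unfolding H_inner_def using assms
  by (simp add: inner_add_left l2_inner_int)

lemma hi_diff_left: assumes "a \<in> L2space M" "b \<in> L2space M" "c \<in> L2space M"
  shows "H_inner M (\<lambda>x. a x - b x) c = H_inner M a c - H_inner M b c"
  unfolding H_inner_def using assms
  by (simp add: inner_diff_left l2_inner_int)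

lemma hi_scale_left: "H_inner M (\<lambda>x. t *\<^sub>R a x) c = t * H_inner M a c"
  unfolding H_inner_def by simp

lemma hn_add_sq: assumes "a \<in> L2space M" "b \<in> L2space M"
  shows "H_norm M (\<lambda>x. a x + b x) ^ 2 = H_norm M a ^ 2 + 2 * H_inner M a b + H_norm M b ^ 2"
  unfolding hn_sq H_inner_def norm_add_sq using assms
  by (simp add: l2_inner_int l2_int)

lemma quad_nonneg:
  fixes A B C :: real
  assumes "\<And>t. 0 \<le> A + 2 * t * B + t^2 * C" "A \<ge> 0" "C \<ge> 0"
  shows "B^2 \<le> A * C"
proof (cases "C = 0")
  case True
  have "B = 0"
  proof (rule ccontr)
    assume B: "B \<noteq> 0"
    define t where "t = - (A + 1) / (2 * B)"
    have e: "2 * t * B = - (A + 1)" unfolding t_def using B by simp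
    have "0 \<le> A + 2 * t * B + t^2 * C" by (rule assms(1))
    then show False using e True by simp
  qed
  then show ?thesis using assms by simp
next
  case False
  then have C: "C > 0" using assms by simp
  define t where "t = - B / C"
  have e1: "2 * t * B = - 2 * (B^2 / C)" unfolding t_def by (simp add: power2_eq_square)
  have e2: "t^2 * C = B^2 / C" unfolding t_def using C by (simp add: power2_eq_square)
  have "0 \<le> A + 2 * t * B + t^2 * C" by (rule assms(1))
  then have "B^2 / C \<le> A" using e1 e2 by linarith
  then show ?thesis using C by (simp add: divide_le_eq mult.commute)
qed

lemma hi_cs: assumes "a \<in> L2space M" "b \<in> L2space M"
  shows "\<bar>H_inner M a b\<bar> \<le> H_norm M a * H_norm M b"
proof -
  have "\<And>t. 0 \<le> H_norm M a ^ 2 + 2 * t * H_inner M a b + t^2 * H_norm M b ^ 2"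
  proof -
    fix t
    have "0 \<le> H_norm M (\<lambda>x. a x + t *\<^sub>R b x) ^ 2" by simp
    also have "\<dots> = H_norm M a ^ 2 + 2 * H_inner M a (\<lambda>x. t *\<^sub>R b x) + H_norm M (\<lambda>x. t *\<^sub>R b x) ^ 2"
      by (rule hn_add_sq[OF assms(1) l2_scale[OF assms(2)]])
    also have "\<dots> = H_norm M a ^ 2 + 2 * t * H_inner M a b + t^2 * H_norm M b ^ 2"
      by (simp add: hn_scale hi_comm[of M a] hi_scale_left power_mult_distrib)
    finally show "0 \<le> H_norm M a ^ 2 + 2 * t * H_inner M a b + t^2 * H_norm M b ^ 2" .
  qed
  then have "(H_inner M a b)^2 \<le> H_norm M a ^ 2 * H_norm M b ^ 2"
    by (rule quad_nonneg) auto
  then have "(H_inner M a b)^2 \<le> (H_norm M a * H_norm M b)^2" by (simp add: power_mult_distrib)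
  then have "\<bar>H_inner M a b\<bar> \<le> \<bar>H_norm M a * H_norm M b\<bar>"
    using abs_le_square_iff[of "H_inner M a b" "H_norm M a * H_norm M b"] by blast
  then show ?thesis using hn_nonneg[of M a] hn_nonneg[of M b] by (simp add: abs_mult)
qed

lemma hn_add: assumes "a \<in> L2space M" "b \<in> L2space M"
  shows "H_norm M (\<lambda>x. a x + b x) \<le> H_norm M a + H_norm M b"
proof -
  have "H_norm M (\<lambda>x. a x + b x) ^ 2 \<le> (H_norm M a + H_norm M b) ^ 2"
    unfolding hn_add_sq[OF assms] using hi_cs[OF assms]
    by (simp add: power2_sum)
  moreover have "0 \<le> H_norm M a + H_norm M b" using hn_nonneg[of M a] hn_nonneg[of M b] by linarith
  ultimately show ?thesis by (rule power2_le_imp_le)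
qed

lemma hn_diff: assumes "a \<in> L2space M" "b \<in> L2space M"
  shows "H_norm M (\<lambda>x. a x - b x) \<le> H_norm M a + H_norm M b"
  using hn_add[OF assms(1) l2_scale[OF assms(2), of "-1"]] hn_scale[of M "-1" b] by simp

lemma hn_neg: "H_norm M (\<lambda>x. b x - a x) = H_norm M (\<lambda>x. a x - b x)"
  using hn_scale[of M "-1" "\<lambda>x. a x - b x"] by simp

lemma hn_tri3: assumes "a \<in> L2space M" "b \<in> L2space M" "c \<in> L2space M"
  shows "H_norm M (\<lambda>x. a x - c x) \<le> H_norm M (\<lambda>x. a x - b x) + H_norm M (\<lambda>x. b x - c x)"
proof -
  have e: "(\<lambda>x. a x - c x) = (\<lambda>x. (a x - b x) + (b x - c x))" by auto
  show ?thesis unfolding e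
    by (rule hn_add) (use assms in \<open>auto intro: l2_diff\<close>)
qed

lemma hn_const_pos:
  assumes "prob_space M" "(v::'a::euclidean_space) \<noteq> 0"
  shows "H_norm M (\<lambda>x. v) > 0"
proof -
  have "H_norm M (\<lambda>x. v) = sqrt (norm v ^ 2)"
    unfolding H_norm_def using prob_space.prob_space[OF assms(1)] by simp
  then show ?thesis using assms by simp
qed

lemma lip_bound:
  fixes M :: "'a::euclidean_space measure"
  assumes P: "prob_space M" and bdd: "bdd_above (lip_ratios M G)" and Lpos: "Lip_const M G > 0"
    and GL2: "\<forall>\<xi>\<in>L2space M. G \<xi> \<in> L2space M"
    and x1: "\<xi>1 \<in> L2space M" and x2: "\<xi>2 \<in> L2space M"
  shows "H_norm M (\<lambda>x. G \<xi>1 x - G \<xi>2 x) \<le> Lip_const M G * H_norm M (\<lambda>x. \<xi>1 x - \<xi>2 x)"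
proof -
  let ?L = "Lip_const M G"
  have basic: "H_norm M (\<lambda>x. G a x - G b x) \<le> ?L * H_norm M (\<lambda>x. a x - b x)"
    if a: "a \<in> L2space M" and b: "b \<in> L2space M" and nz: "H_norm M (\<lambda>x. a x - b x) \<noteq> 0" for a b
  proof -
    have "H_norm M (\<lambda>x. G a x - G b x) / H_norm M (\<lambda>x. a x - b x) \<in> lip_ratios M G"
      unfolding lip_ratios_def using a b nz by blast
    then have "H_norm M (\<lambda>x. G a x - G b x) / H_norm M (\<lambda>x. a x - b x) \<le> ?L"
      unfolding Lip_const_def using bdd by (rule cSup_upper)
    moreover have "H_norm M (\<lambda>x. a x - b x) > 0" using nz hn_nonneg[of M "\<lambda>x. a x - b x"] by linarith
    ultimately show ?thesis by (simp add: divide_le_eq mult.commute)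
  qed
  show ?thesis
  proof (cases "H_norm M (\<lambda>x. \<xi>1 x - \<xi>2 x) = 0")
    case False then show ?thesis using basic x1 x2 by blast
  next
    case True
    obtain v :: 'a where v: "v \<noteq> 0" using nonzero_Basis by blast
    define w where "w = (\<lambda>x::'a. v)"
    have wL: "w \<in> L2space M" unfolding w_def
      by (rule l2_const) (use P in \<open>simp add: prob_space.finite_measure\<close>)
    have nw: "H_norm M w > 0" unfolding w_def by (rule hn_const_pos[OF P v])
    let ?d = "H_norm M (\<lambda>x. G \<xi>1 x - G \<xi>2 x)"
    have key: "?d \<le> 2 * ?L * c * H_norm M w" if c: "c > 0" for c
    proof -
      define \<xi>3 where "\<xi>3 = (\<lambda>x. \<xi>1 x + c *\<^sub>R w x)"
      have x3: "\<xi>3 \<in> L2space M" unfolding \<xi>3_def by (intro l2_add l2_scale x1 wL)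
      have e13: "(\<lambda>x. \<xi>3 x - \<xi>1 x) = (\<lambda>x. c *\<^sub>R w x)" unfolding \<xi>3_def by auto
      have n13: "H_norm M (\<lambda>x. \<xi>3 x - \<xi>1 x) = c * H_norm M w"
        unfolding e13 hn_scale using c by simp
      have n31: "H_norm M (\<lambda>x. \<xi>1 x - \<xi>3 x) = c * H_norm M w"
        using n13 hn_neg[of M \<xi>1 \<xi>3] by simp
      have "H_norm M (\<lambda>x. \<xi>3 x - \<xi>1 x) \<le> H_norm M (\<lambda>x. \<xi>3 x - \<xi>2 x) + H_norm M (\<lambda>x. \<xi>2 x - \<xi>1 x)"
        by (rule hn_tri3[OF x3 x2 x1])
      then have n32pos: "H_norm M (\<lambda>x. \<xi>3 x - \<xi>2 x) \<noteq> 0"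
        using n13 True hn_neg[of M \<xi>2 \<xi>1] mult_pos_pos[OF c nw] by auto
      have n32: "H_norm M (\<lambda>x. \<xi>3 x - \<xi>2 x) \<le> c * H_norm M w"
        using hn_tri3[OF x3 x1 x2] n13 True by simp
      have GL: "G \<xi>1 \<in> L2space M" "G \<xi>2 \<in> L2space M" "G \<xi>3 \<in> L2space M"
        using GL2 x1 x2 x3 by auto
      have "?d \<le> H_norm M (\<lambda>x. G \<xi>1 x - G \<xi>3 x) + H_norm M (\<lambda>x. G \<xi>3 x - G \<xi>2 x)"
        by (rule hn_tri3[OF GL(1) GL(3) GL(2)])
      also have "\<dots> \<le> ?L * H_norm M (\<lambda>x. \<xi>1 x - \<xi>3 x) + ?L * H_norm M (\<lambda>x. \<xi>3 x - \<xi>2 x)"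
        using basic[OF x1 x3] basic[OF x3 x2] n32pos n31 c nw by auto
      also have "\<dots> \<le> ?L * (c * H_norm M w) + ?L * (c * H_norm M w)"
        using n31 n32 Lpos by (intro add_mono mult_left_mono) auto
      finally show ?thesis by (simp add: algebra_simps)
    qed
    have "?d \<le> 0"
    proof (rule ccontr)
      assume "\<not> ?d \<le> 0"
      then have dp: "?d > 0" by simp
      define c where "c = ?d / (4 * ?L * H_norm M w)"
      have cp: "c > 0" unfolding c_def using dp Lpos nw by simp
      have "2 * ?L * c * H_norm M w = ?d / 2" unfolding c_def using Lpos nw by (simp add: field_simps)
      then show False using key[OF cp] dp by simp
    qed
    then show ?thesis using True hn_nonneg[of M] by (simp add: order_antisym)
  qed
qed

lemma hderiv_inner:
  fixes M :: "'a::euclidean_space measure"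
  assumes d: "has_H_derivative M X D t S" and XS: "\<forall>s\<in>S. X s \<in> L2space M" and t: "t \<in> S"
    and DL: "D \<in> L2space M" and RL: "R \<in> L2space M"
  shows "((\<lambda>s. H_inner M (X s) R) has_field_derivative H_inner M D R) (at t within S)"
  unfolding has_field_derivative_iff Lim_within
proof (intro allI impI)
  fix e :: real assume e: "e > 0"
  define \<epsilon> where "\<epsilon> = e / (2 * (H_norm M R + 1))"
  have \<epsilon>p: "\<epsilon> > 0" unfolding \<epsilon>_def using e hn_nonneg[of M R] by simp
  obtain \<delta> where \<delta>: "\<delta> > 0" and hd: "\<forall>s\<in>S. \<bar>s - t\<bar> < \<delta> \<longrightarrow>
        H_norm M (\<lambda>x. X s x - X t x - (s - t) *\<^sub>R D x) \<le> \<epsilon> * \<bar>s - t\<bar>"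
    using d \<epsilon>p unfolding has_H_derivative_def by blast
  show "\<exists>\<delta>>0. \<forall>y\<in>S. 0 < dist y t \<and> dist y t < \<delta> \<longrightarrow>
      dist ((H_inner M (X y) R - H_inner M (X t) R) / (y - t)) (H_inner M D R) < e"
  proof (intro exI[of _ \<delta>] conjI ballI impI \<delta>)
    fix y assume y: "y \<in> S" and yd: "0 < dist y t \<and> dist y t < \<delta>"
    then have yt: "y \<noteq> t" "\<bar>y - t\<bar> < \<delta>" by (auto simp: dist_real_def)
    have XL: "X y \<in> L2space M" "X t \<in> L2space M" using XS y t by auto
    have lin: "H_inner M (\<lambda>x. X y x - X t x - (y - t) *\<^sub>R D x) R
        = H_inner M (X y) R - H_inner M (X t) R - (y - t) * H_inner M D R"
      by (simp add: hi_diff_left l2_diff l2_scale XL DL RL hi_scale_left)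
    have "\<bar>H_inner M (\<lambda>x. X y x - X t x - (y - t) *\<^sub>R D x) R\<bar>
        \<le> H_norm M (\<lambda>x. X y x - X t x - (y - t) *\<^sub>R D x) * H_norm M R"
      by (rule hi_cs) (intro l2_diff l2_scale XL DL RL)+
    also have "\<dots> \<le> \<epsilon> * \<bar>y - t\<bar> * H_norm M R"
      using hd y yt by (intro mult_right_mono) (auto simp: hn_nonneg)
    finally have b1: "\<bar>H_inner M (X y) R - H_inner M (X t) R - (y - t) * H_inner M D R\<bar>
        \<le> \<epsilon> * \<bar>y - t\<bar> * H_norm M R" using lin by simp
    have "(H_inner M (X y) R - H_inner M (X t) R) / (y - t) - H_inner M D R
        = (H_inner M (X y) R - H_inner M (X t) R - (y - t) * H_inner M D R) / (y - t)"
      using yt by (simp add: field_simps)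
    then have "dist ((H_inner M (X y) R - H_inner M (X t) R) / (y - t)) (H_inner M D R)
        = \<bar>H_inner M (X y) R - H_inner M (X t) R - (y - t) * H_inner M D R\<bar> / \<bar>y - t\<bar>"
      by (simp add: dist_real_def abs_divide)
    also have "\<dots> \<le> \<epsilon> * H_norm M R"
      using b1 yt by (simp add: divide_le_eq mult.commute mult.left_commute)
    also have "\<dots> < e"
    proof -
      have "\<epsilon> * H_norm M R \<le> \<epsilon> * (H_norm M R + 1)" using \<epsilon>p by simp
      also have "\<dots> = e / 2" unfolding \<epsilon>_def using hn_nonneg[of M R]
        by (simp add: field_simps)
      finally show ?thesis using e by simp
    qed
    finally show "dist ((H_inner M (X y) R - H_inner M (X t) R) / (y - t)) (H_inner M D R) < e" .
  qed
qed

lemma arith0: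
  fixes lY gY PP l\<eta> g\<eta> QQ sa sb e D :: real
  assumes "lY / 2 + gY / 2 + PP \<le> l\<eta> / 2 + g\<eta> / 2 + QQ" "l\<eta> \<le> lY - sa + e" "g\<eta> = gY - sb"
    "QQ = PP + D"
  shows "0 \<le> (- sa + e - sb) / 2 + D"
  using assms by argo

lemma arith1:
  fixes lY gY P l\<eta> g\<eta> Q \<tau> s a b c n \<epsilon> :: real
  assumes "lY / 2 + gY / 2 + P / (2 * \<tau>) \<le> l\<eta> / 2 + g\<eta> / 2 + Q / (2 * \<tau>)"
    "l\<eta> \<le> lY - s * a + \<epsilon> * (s * n)" "g\<eta> = gY - s * b"
    "Q = P - 2 * s * c + s^2 * n^2" "\<tau> > 0"
  shows "0 \<le> (- (s * a) + \<epsilon> * (s * n) - s * b) / 2 + (- 2 * s * c + s^2 * n^2) / (2 * \<tau>)"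
proof -
  have "Q / (2 * \<tau>) = P / (2 * \<tau>) + (- 2 * s * c + s^2 * n^2) / (2 * \<tau>)"
    unfolding assms(4) by (simp add: add_divide_distrib diff_divide_distrib)
  then show ?thesis using arith0[OF assms(1-3)] by auto
qed

lemma opt_cond:
  fixes M :: "'a::euclidean_space measure"
  assumes grad: "is_frechet_gradient M \<phi> G" and YL: "Y \<in> L2space M" and ZL: "Z \<in> L2space M"
    and tau: "\<tau> > 0"
    and min: "\<forall>\<xi>\<in>L2space M. trap_obj M \<phi> G \<tau> Z Y \<le> trap_obj M \<phi> G \<tau> Z \<xi>"
  shows "H_norm M (\<lambda>x. Y x - Z x + (\<tau>/2) *\<^sub>R (G Y x + G Z x)) = 0"
proof (rule ccontr)
  define w where "w = (\<lambda>x. Y x - Z x + (\<tau>/2) *\<^sub>R (G Y x + G Z x))"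
  assume "H_norm M (\<lambda>x. Y x - Z x + (\<tau>/2) *\<^sub>R (G Y x + G Z x)) \<noteq> 0"
  then have nz: "H_norm M w \<noteq> 0" unfolding w_def .
  define n where "n = H_norm M w"
  have np: "n > 0" using nz hn_nonneg[of M w] unfolding n_def by linarith
  have GY: "G Y \<in> L2space M" and GZ: "G Z \<in> L2space M"
    using grad YL ZL unfolding is_frechet_gradient_def by auto
  have YZ: "(\<lambda>x. Y x - Z x) \<in> L2space M" using YL ZL by (rule l2_diff)
  have GYZ: "(\<lambda>x. G Y x + G Z x) \<in> L2space M" using GY GZ by (rule l2_add)
  have wL: "w \<in> L2space M" unfolding w_def by (rule l2_add[OF YZ l2_scale[OF GYZ]])
  define \<epsilon> where "\<epsilon> = n / (2 * \<tau>)"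
  have \<epsilon>p: "\<epsilon> > 0" unfolding \<epsilon>_def using np tau by simp
  obtain \<delta> where \<delta>: "\<delta> > 0" and hd: "\<forall>\<eta>\<in>L2space M. H_norm M (\<lambda>x. \<eta> x - Y x) < \<delta> \<longrightarrow>
           \<bar>lift M \<phi> \<eta> - lift M \<phi> Y - H_inner M (G Y) (\<lambda>x. \<eta> x - Y x)\<bar>
             \<le> \<epsilon> * H_norm M (\<lambda>x. \<eta> x - Y x)"
    using grad YL \<epsilon>p unfolding is_frechet_gradient_def by blast
  define s where "s = min 1 (\<delta> / (2 * n))"
  have sp: "s > 0" unfolding s_def using \<delta> np by simp
  have s1: "s \<le> 1" unfolding s_def by simp
  have sd: "s * n < \<delta>"
  proof -
    have "s * n \<le> \<delta> / (2 * n) * n" unfolding s_def using np by (intro mult_right_mono) auto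
    also have "\<dots> = \<delta> / 2" using np by simp
    finally show ?thesis using \<delta> by simp
  qed
  define \<eta> where "\<eta> = (\<lambda>x. Y x + (- s) *\<^sub>R w x)"
  have \<eta>L: "\<eta> \<in> L2space M" unfolding \<eta>_def by (rule l2_add[OF YL l2_scale[OF wL]])
  have e1: "(\<lambda>x. \<eta> x - Y x) = (\<lambda>x. (- s) *\<^sub>R w x)" unfolding \<eta>_def by auto
  have n1: "H_norm M (\<lambda>x. \<eta> x - Y x) = s * n" unfolding e1 hn_scale n_def using sp by simp
  have i1: "H_inner M (G Y) (\<lambda>x. \<eta> x - Y x) = - s * H_inner M w (G Y)"
    unfolding e1 hi_comm[of M "G Y"] hi_scale_left by simp
  have lift_le: "lift M \<phi> \<eta> \<le> lift M \<phi> Y - s * H_inner M w (G Y) + \<epsilon> * (s * n)"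
    using hd \<eta>L n1 sd i1 by fastforce
  have i2: "H_inner M (G Z) \<eta> = H_inner M (G Z) Y - s * H_inner M w (G Z)"
    unfolding hi_comm[of M "G Z"] \<eta>_def
    by (simp add: hi_diff_left[OF YL l2_scale[OF wL] GZ] hi_scale_left)
  have e3: "(\<lambda>x. \<eta> x - Z x) = (\<lambda>x. (Y x - Z x) + (- s) *\<^sub>R w x)" unfolding \<eta>_def by auto
  have n3: "H_norm M (\<lambda>x. \<eta> x - Z x) ^ 2
      = H_norm M (\<lambda>x. Y x - Z x) ^ 2 - 2 * s * H_inner M w (\<lambda>x. Y x - Z x) + s^2 * n^2"
    unfolding e3 hn_add_sq[OF YZ l2_scale[OF wL]] hn_scale hi_comm[of M "\<lambda>x. Y x - Z x"] hi_scale_left n_def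
    using sp by (simp add: power_mult_distrib)
  have ww: "n^2 = H_inner M w (\<lambda>x. Y x - Z x) + (\<tau>/2) * (H_inner M w (G Y) + H_inner M w (G Z))"
  proof -
    have gen: "H_inner M w v = H_inner M (\<lambda>x. Y x - Z x) v + (\<tau>/2) * (H_inner M (G Y) v + H_inner M (G Z) v)"
      if vL: "v \<in> L2space M" for v
      unfolding w_def hi_add_left[OF YZ l2_scale[OF GYZ] vL] hi_scale_left hi_add_left[OF GY GZ vL] ..
    have "n^2 = H_inner M w w" unfolding n_def hi_self ..
    also have "\<dots> = H_inner M (\<lambda>x. Y x - Z x) w + (\<tau>/2) * (H_inner M (G Y) w + H_inner M (G Z) w)"
      by (rule gen[OF wL])
    finally show ?thesis by (simp add: hi_comm)
  qed
  have "trap_obj M \<phi> G \<tau> Z Y \<le> trap_obj M \<phi> G \<tau> Z \<eta>" using min \<eta>L by blast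
  then have ineq: "lift M \<phi> Y / 2 + H_inner M (G Z) Y / 2 + H_norm M (\<lambda>x. Y x - Z x) ^ 2 / (2 * \<tau>)
      \<le> lift M \<phi> \<eta> / 2 + H_inner M (G Z) \<eta> / 2 + H_norm M (\<lambda>x. \<eta> x - Z x) ^ 2 / (2 * \<tau>)"
    unfolding trap_obj_def .
  define a where "a = H_inner M w (G Y)"
  define b where "b = H_inner M w (G Z)"
  define c where "c = H_inner M w (\<lambda>x. Y x - Z x)"
  have "0 \<le> (- (s * a) + \<epsilon> * (s * n) - s * b) / 2 + (- 2 * s * c + s^2 * n^2) / (2 * \<tau>)"
    using arith1[OF ineq lift_le i2 n3 tau] unfolding a_def b_def c_def .
  also have "\<dots> = s / (2 * \<tau>) * (- \<tau> * (a + b) + \<tau> * \<epsilon> * n - 2 * c + s * n^2)"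
    using tau by (simp add: field_simps power2_eq_square)
  finally have h0: "0 \<le> s / (2 * \<tau>) * (- \<tau> * (a + b) + \<tau> * \<epsilon> * n - 2 * c + s * n^2)" .
  have "s / (2 * \<tau>) > 0" using sp tau by simp
  then have "0 \<le> - \<tau> * (a + b) + \<tau> * \<epsilon> * n - 2 * c + s * n^2"
    using h0 zero_le_mult_iff[of "s / (2 * \<tau>)"] by auto
  moreover have "\<tau> * \<epsilon> * n = n^2 / 2" unfolding \<epsilon>_def using tau by (simp add: power2_eq_square)
  moreover have "- \<tau> * (a + b) - 2 * c = - 2 * n^2" using ww unfolding a_def b_def c_def by (simp add: algebra_simps)
  moreover have "s * n^2 \<le> n^2" using s1 np by (simp add: mult_le_cancel_right1)
  moreover have "n^2 > 0" using np by simp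
  ultimately show False by linarith
qed

lemma trunc:
  fixes M :: "'a::euclidean_space measure" and X Xd Xdd :: "real \<Rightarrow> 'a \<Rightarrow> 'a"
  assumes X_in: "\<forall>t\<ge>0. X t \<in> L2space M"
    and X_deriv: "\<forall>t\<ge>0. Xd t \<in> L2space M \<and> has_H_derivative M X (Xd t) t {0..}"
    and XddL: "Xdd a \<in> L2space M"
    and hold: "\<forall>t\<in>{a<..b}. H_norm M (\<lambda>x. Xd t x - Xd a x - (t - a) *\<^sub>R Xdd a x) \<le> K * \<bar>t - a\<bar> powr (1 + \<alpha>)"
    and K: "K \<ge> 0" and a: "0 \<le> a" and ab: "a < b" and al: "\<alpha> > 0"
  shows "H_norm M (\<lambda>x. X b x - X a x - ((b - a) / 2) *\<^sub>R (Xd a x + Xd b x))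
           \<le> 3 / 2 * K * (b - a) powr (1 + \<alpha>) * (b - a)"
proof -
  define h where "h = b - a"
  have hp: "h > 0" unfolding h_def using ab by simp
  have XL: "\<And>t. t \<ge> 0 \<Longrightarrow> X t \<in> L2space M" using X_in by auto
  have XdL: "\<And>t. t \<ge> 0 \<Longrightarrow> Xd t \<in> L2space M" using X_deriv by auto
  have XaL: "X a \<in> L2space M" and XbL: "X b \<in> L2space M" using XL a ab by auto
  have XdaL: "Xd a \<in> L2space M" and XdbL: "Xd b \<in> L2space M" using XdL a ab by auto
  have XdabL: "(\<lambda>x. Xd a x + Xd b x) \<in> L2space M" using XdaL XdbL by (rule l2_add)
  define R where "R = (\<lambda>x. X b x - X a x - (h / 2) *\<^sub>R (Xd a x + Xd b x))"
  have RL: "R \<in> L2space M" unfolding R_def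
    by (rule l2_diff[OF l2_diff[OF XbL XaL] l2_scale[OF XdabL]])
  define g where "g = (\<lambda>s. H_inner M (X s) R - (s - a) * H_inner M (Xd a) R - ((s - a)^2 / 2) * H_inner M (Xdd a) R)"
  define g' where "g' = (\<lambda>s. H_inner M (Xd s) R - H_inner M (Xd a) R - (s - a) * H_inner M (Xdd a) R)"
  have deriv: "(g has_field_derivative g' s) (at s within {a..b})" if s: "s \<in> {a..b}" for s
  proof -
    have s0: "s \<ge> 0" using s a by simp
    have d1: "((\<lambda>s. H_inner M (X s) R) has_field_derivative H_inner M (Xd s) R) (at s within {0..})"
      by (rule hderiv_inner) (use X_deriv X_in s0 RL in auto)
    have d1': "((\<lambda>s. H_inner M (X s) R) has_field_derivative H_inner M (Xd s) R) (at s within {a..b})"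
      by (rule has_field_derivative_subset[OF d1]) (use a in auto)
    have d2: "((\<lambda>s. (s - a) * H_inner M (Xd a) R) has_field_derivative H_inner M (Xd a) R) (at s within {a..b})"
      by (auto intro!: derivative_eq_intros)
    have d3: "((\<lambda>s. ((s - a)^2 / 2) * H_inner M (Xdd a) R) has_field_derivative (s - a) * H_inner M (Xdd a) R) (at s within {a..b})"
      by (auto intro!: derivative_eq_intros simp: power2_eq_square field_simps)
    show ?thesis unfolding g_def g'_def
      using DERIV_diff[OF DERIV_diff[OF d1' d2] d3] .
  qed
  define B where "B = K * h powr (1 + \<alpha>) * H_norm M R"
  have gb: "norm (g' s) \<le> B" if s: "s \<in> {a..b}" for s
  proof (cases "s = a")
    case True
    then show ?thesis unfolding g'_def B_def using K hn_nonneg[of M R] by simp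
  next
    case False
    then have sa: "s \<in> {a<..b}" using s by auto
    have XdsL: "Xd s \<in> L2space M" using XdL sa a by auto
    have vL: "(\<lambda>x. Xd s x - Xd a x - (s - a) *\<^sub>R Xdd a x) \<in> L2space M"
      by (rule l2_diff[OF l2_diff[OF XdsL XdaL] l2_scale[OF XddL]])
    have "g' s = H_inner M (\<lambda>x. Xd s x - Xd a x - (s - a) *\<^sub>R Xdd a x) R"
      unfolding g'_def hi_diff_left[OF l2_diff[OF XdsL XdaL] l2_scale[OF XddL] RL]
        hi_diff_left[OF XdsL XdaL RL] hi_scale_left ..
    then have "norm (g' s) \<le> H_norm M (\<lambda>x. Xd s x - Xd a x - (s - a) *\<^sub>R Xdd a x) * H_norm M R"
      using hi_cs[OF vL RL] by simp
    also have "\<dots> \<le> K * \<bar>s - a\<bar> powr (1 + \<alpha>) * H_norm M R"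
      using hold sa by (intro mult_right_mono) (auto simp: hn_nonneg)
    also have "\<dots> \<le> K * h powr (1 + \<alpha>) * H_norm M R"
      using sa K al unfolding h_def
      by (intro mult_right_mono mult_left_mono powr_mono2) (auto simp: hn_nonneg)
    finally show ?thesis unfolding B_def .
  qed
  have "norm (g b - g a) \<le> B * norm (b - a)"
    by (rule field_differentiable_bound[of "{a..b}" g g' B]) (use deriv gb ab in auto)
  then have gba: "\<bar>g b - g a\<bar> \<le> B * h" unfolding h_def using ab by simp
  have gdiff: "g b - g a = H_inner M (X b) R - H_inner M (X a) R - h * H_inner M (Xd a) R
      - (h^2 / 2) * H_inner M (Xdd a) R"
    unfolding g_def h_def by simp
  have gen: "H_inner M R v = H_inner M (X b) v - H_inner M (X a) v - (h / 2) * (H_inner M (Xd a) v + H_inner M (Xd b) v)"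
    if vL: "v \<in> L2space M" for v
    unfolding R_def hi_diff_left[OF l2_diff[OF XbL XaL] l2_scale[OF XdabL] vL]
      hi_diff_left[OF XbL XaL vL] hi_scale_left hi_add_left[OF XdaL XdbL vL] ..
  have wL: "(\<lambda>x. Xd b x - Xd a x - h *\<^sub>R Xdd a x) \<in> L2space M"
    by (rule l2_diff[OF l2_diff[OF XdbL XdaL] l2_scale[OF XddL]])
  have wexp: "H_inner M (\<lambda>x. Xd b x - Xd a x - h *\<^sub>R Xdd a x) R
      = H_inner M (Xd b) R - H_inner M (Xd a) R - h * H_inner M (Xdd a) R"
    unfolding hi_diff_left[OF l2_diff[OF XdbL XdaL] l2_scale[OF XddL] RL]
        hi_diff_left[OF XdbL XdaL RL] hi_scale_left ..
  have wb: "\<bar>H_inner M (\<lambda>x. Xd b x - Xd a x - h *\<^sub>R Xdd a x) R\<bar> \<le> K * h powr (1 + \<alpha>) * H_norm M R"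
  proof -
    have "\<bar>H_inner M (\<lambda>x. Xd b x - Xd a x - h *\<^sub>R Xdd a x) R\<bar>
        \<le> H_norm M (\<lambda>x. Xd b x - Xd a x - h *\<^sub>R Xdd a x) * H_norm M R"
      by (rule hi_cs[OF wL RL])
    also have "\<dots> \<le> K * \<bar>b - a\<bar> powr (1 + \<alpha>) * H_norm M R"
      using hold ab unfolding h_def by (intro mult_right_mono) (auto simp: hn_nonneg)
    finally show ?thesis unfolding h_def using ab by simp
  qed
  have idR: "H_norm M R ^ 2 = (g b - g a) - (h / 2) * H_inner M (\<lambda>x. Xd b x - Xd a x - h *\<^sub>R Xdd a x) R"
    unfolding hi_self[symmetric] gen[OF RL] gdiff wexp by (simp add: algebra_simps power2_eq_square)
  have "H_norm M R ^ 2 \<le> B * h + (h / 2) * (K * h powr (1 + \<alpha>) * H_norm M R)"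
  proof -
    have "- (h / 2) * H_inner M (\<lambda>x. Xd b x - Xd a x - h *\<^sub>R Xdd a x) R \<le> (h / 2) * (K * h powr (1 + \<alpha>) * H_norm M R)"
    proof -
      have "- H_inner M (\<lambda>x. Xd b x - Xd a x - h *\<^sub>R Xdd a x) R \<le> K * h powr (1 + \<alpha>) * H_norm M R"
        using wb by linarith
      then have "(h / 2) * (- H_inner M (\<lambda>x. Xd b x - Xd a x - h *\<^sub>R Xdd a x) R) \<le> (h / 2) * (K * h powr (1 + \<alpha>) * H_norm M R)"
        by (rule mult_left_mono) (use hp in simp)
      then show ?thesis by simp
    qed
    then show ?thesis unfolding idR using gba by linarith
  qed
  also have "\<dots> = (3 / 2 * K * h powr (1 + \<alpha>) * h) * H_norm M R" unfolding B_def by (simp add: algebra_simps)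
  finally have sq: "H_norm M R * H_norm M R \<le> (3 / 2 * K * h powr (1 + \<alpha>) * h) * H_norm M R"
    by (simp add: power2_eq_square)
  have "H_norm M R \<le> 3 / 2 * K * h powr (1 + \<alpha>) * h"
  proof (cases "H_norm M R = 0")
    case True then show ?thesis using K hp by simp
  next
    case False
    then have "H_norm M R > 0" using hn_nonneg[of M R] by linarith
    then show ?thesis using sq by simp
  qed
  then show ?thesis unfolding R_def h_def .
qed

lemma id_L2: assumes "\<rho> \<in> P2" shows "(\<lambda>x. x) \<in> L2space \<rho>"
proof -
  have s: "sets \<rho> = sets borel" and fin: "(\<integral>\<^sup>+ x. ennreal (norm x ^ 2) \<partial>\<rho>) < \<infinity>"
    using assms unfolding P2_def by auto
  have m: "(\<lambda>x. x) \<in> borel_measurable \<rho>" using s by (rule measurable_ident_sets)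
  have "integrable \<rho> (\<lambda>x. norm x ^ 2)"
    by (rule integrableI_bounded) (use m fin in auto)
  then show ?thesis unfolding L2space_def using m by simp
qed

lemma w2_le:
  fixes M :: "'a::euclidean_space measure"
  assumes P: "prob_space M" and s: "sets M = sets borel" and f: "f \<in> L2space M" and g: "g \<in> L2space M"
  shows "W2 (distr M borel f) (distr M borel g) \<le> H_norm M (\<lambda>x. g x - f x)"
proof -
  have fm: "f \<in> borel_measurable M" and gm: "g \<in> borel_measurable M" using f g by (auto simp: L2space_def)
  define \<pi> where "\<pi> = distr M borel (\<lambda>x. (f x, g x))"
  have pm: "(\<lambda>x. (f x, g x)) \<in> measurable M borel" using fm gm by (rule borel_measurable_Pair)
  have fstm: "fst \<in> borel_measurable (borel :: ('a \<times> 'a) measure)"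
    by (rule borel_measurable_continuous_onI[OF continuous_on_fst[OF continuous_on_id]])
  have sndm: "snd \<in> borel_measurable (borel :: ('a \<times> 'a) measure)"
    by (rule borel_measurable_continuous_onI[OF continuous_on_snd[OF continuous_on_id]])
  have cpl: "\<pi> \<in> couplings (distr M borel f) (distr M borel g)"
    unfolding couplings_def \<pi>_def
  proof (intro CollectI conjI)
    show "sets (distr M borel (\<lambda>x. (f x, g x))) = sets borel" by simp
    show "prob_space (distr M borel (\<lambda>x. (f x, g x)))" using P pm by (rule prob_space.prob_space_distr)
    show "distr (distr M borel (\<lambda>x. (f x, g x))) borel fst = distr M borel f"
      using distr_distr[OF fstm pm] by (simp add: comp_def)
    show "distr (distr M borel (\<lambda>x. (f x, g x))) borel snd = distr M borel g"
      using distr_distr[OF sndm pm] by (simp add: comp_def)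
  qed
  have dL0: True ..
  have dL: "(\<lambda>x. g x - f x) \<in> L2space M" using g f by (rule l2_diff)
  have "(\<integral>\<^sup>+ p. ennreal (norm (fst p - snd p) ^ 2) \<partial>\<pi>) = (\<integral>\<^sup>+ x. ennreal (norm (f x - g x) ^ 2) \<partial>M)"
  proof -
    have cm: "(\<lambda>p::'a \<times> 'a. ennreal ((norm (fst p - snd p))\<^sup>2)) \<in> borel_measurable borel"
      by (rule borel_measurable_continuous_onI)
         (intro continuous_on_ennreal continuous_on_power continuous_on_norm continuous_on_diff continuous_on_fst continuous_on_snd continuous_on_id)
    have cm': "(\<lambda>p::'a \<times> 'a. ennreal ((norm (fst p - snd p))\<^sup>2)) \<in> borel_measurable (distr M borel (\<lambda>x. (f x, g x)))"
      unfolding measurable_distr_eq1 by (rule cm)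
    show ?thesis unfolding \<pi>_def nn_integral_distr[OF pm cm'] by simp
  qed
  also have "\<dots> = (\<integral>\<^sup>+ x. ennreal (norm (g x - f x) ^ 2) \<partial>M)" by (simp add: norm_minus_commute)
  also have "\<dots> = ennreal (\<integral>x. norm (g x - f x) ^ 2 \<partial>M)"
    by (rule nn_integral_eq_integral) (use dL in \<open>auto simp: L2space_def\<close>)
  finally have eq: "(\<integral>\<^sup>+ p. ennreal (norm (fst p - snd p) ^ 2) \<partial>\<pi>) = ennreal (\<integral>x. norm (g x - f x) ^ 2 \<partial>M)" .
  have "(INF \<pi>\<in>couplings (distr M borel f) (distr M borel g). \<integral>\<^sup>+ p. ennreal (norm (fst p - snd p) ^ 2) \<partial>\<pi>)
      \<le> ennreal (\<integral>x. norm (g x - f x) ^ 2 \<partial>M)"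
    unfolding eq[symmetric] by (rule INF_lower[OF cpl])
  then have "enn2real (INF \<pi>\<in>couplings (distr M borel f) (distr M borel g). \<integral>\<^sup>+ p. ennreal (norm (fst p - snd p) ^ 2) \<partial>\<pi>)
      \<le> (\<integral>x. norm (g x - f x) ^ 2 \<partial>M)"
    by (rule enn2real_leI[rotated]) (simp add: integral_nonneg_AE)
  then show ?thesis unfolding W2_def H_norm_def by (rule real_sqrt_le_mono)
qed

lemma rec_real:
  fixes x E0 E1 r :: real
  assumes x: "0 \<le> x" "x \<le> 1/2" and E0: "E0 \<ge> 0" and r: "r \<ge> 0"
    and h: "E1 \<le> E0 + x * E1 + x * E0 + r"
  shows "E1 \<le> exp (4 * x) * E0 + 2 * r"
proof -
  have h1: "(1 - x) * E1 \<le> (1 + x) * E0 + r" using h by (simp add: algebra_simps)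
  have ex: "1 + 4 * x \<le> exp (4 * x)" by (rule exp_ge_add_one_self)
  have q: "x * (2 - 4 * x) \<ge> 0" using x by (intro mult_nonneg_nonneg) auto
  have "(1 + x) \<le> (1 - x) * (1 + 4 * x)" using q by (simp add: algebra_simps)
  also have "\<dots> \<le> (1 - x) * exp (4 * x)" using ex x by (intro mult_left_mono) auto
  finally have "(1 + x) * E0 \<le> ((1 - x) * exp (4 * x)) * E0" using E0 by (intro mult_right_mono) auto
  then have h2: "(1 - x) * (E1 - exp (4 * x) * E0) \<le> r" using h1 by (simp add: algebra_simps)
  define D where "D = E1 - exp (4 * x) * E0"
  show ?thesis
  proof (cases "D \<le> 0")
    case True then show ?thesis using r unfolding D_def by simp
  next
    case False
    have "1 \<le> 2 * (1 - x)" using x by simp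
    then have "1 * D \<le> 2 * (1 - x) * D" using False by (intro mult_right_mono) auto
    then have "D \<le> 2 * (1 - x) * D" by simp
    then have "D \<le> 2 * r" using h2 unfolding D_def by (simp add: algebra_simps)
    then show ?thesis unfolding D_def by simp
  qed
qed

lemma gron:
  fixes E :: "nat \<Rightarrow> real"
  assumes step: "\<And>k. k < n \<Longrightarrow> E (Suc k) \<le> p * E k + c" and p: "p > 1" and c: "c \<ge> 0"
  shows "E n \<le> p ^ n * E 0 + c * (p ^ n - 1) / (p - 1)"
  using step
proof (induction n)
  case 0 then show ?case by simp
next
  case (Suc n)
  have IH: "E n \<le> p ^ n * E 0 + c * (p ^ n - 1) / (p - 1)" using Suc by auto
  have "E (Suc n) \<le> p * E n + c" using Suc.prems by auto
  also have "\<dots> \<le> p * (p ^ n * E 0 + c * (p ^ n - 1) / (p - 1)) + c"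
    using IH p by (intro add_right_mono mult_left_mono) auto
  also have "\<dots> = p ^ Suc n * E 0 + c * (p ^ Suc n - 1) / (p - 1)"
  proof -
    have ne: "p - 1 \<noteq> 0" using p by simp
    have "p * (c * (p ^ n - 1) / (p - 1)) + c = (p * (c * (p ^ n - 1)) + c * (p - 1)) / (p - 1)"
      using ne by (simp add: divide_simps)
    also have "p * (c * (p ^ n - 1)) + c * (p - 1) = c * (p ^ Suc n - 1)" by (simp add: algebra_simps)
    finally show ?thesis by (simp add: algebra_simps)
  qed
  finally show ?case .
qed

lemma tri7:
  assumes "e0 \<in> L2space M" "u1 \<in> L2space M" "d1 \<in> L2space M" "d0 \<in> L2space M"
    "u2 \<in> L2space M" "u3 \<in> L2space M" "R \<in> L2space M"
  shows "H_norm M (\<lambda>x. e0 x + u1 x - c *\<^sub>R d1 x - c *\<^sub>R d0 x - c *\<^sub>R (u2 x + u3 x) - R x)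
    \<le> H_norm M e0 + H_norm M u1 + \<bar>c\<bar> * H_norm M d1 + \<bar>c\<bar> * H_norm M d0
       + \<bar>c\<bar> * (H_norm M u2 + H_norm M u3) + H_norm M R"
proof -
  note L = assms
  have f1: "(\<lambda>x. e0 x + u1 x) \<in> L2space M" using L by (intro l2_add)
  have f2: "(\<lambda>x. e0 x + u1 x - c *\<^sub>R d1 x) \<in> L2space M" by (rule l2_diff[OF f1 l2_scale[OF L(3)]])
  have f3: "(\<lambda>x. e0 x + u1 x - c *\<^sub>R d1 x - c *\<^sub>R d0 x) \<in> L2space M" by (rule l2_diff[OF f2 l2_scale[OF L(4)]])
  have u23: "(\<lambda>x. u2 x + u3 x) \<in> L2space M" using L by (intro l2_add)
  have f4: "(\<lambda>x. e0 x + u1 x - c *\<^sub>R d1 x - c *\<^sub>R d0 x - c *\<^sub>R (u2 x + u3 x)) \<in> L2space M"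
    by (rule l2_diff[OF f3 l2_scale[OF u23]])
  have i1: "H_norm M (\<lambda>x. e0 x + u1 x - c *\<^sub>R d1 x - c *\<^sub>R d0 x - c *\<^sub>R (u2 x + u3 x) - R x)
      \<le> H_norm M (\<lambda>x. e0 x + u1 x - c *\<^sub>R d1 x - c *\<^sub>R d0 x - c *\<^sub>R (u2 x + u3 x)) + H_norm M R"
    by (rule hn_diff[OF f4 L(7)])
  have i2: "H_norm M (\<lambda>x. e0 x + u1 x - c *\<^sub>R d1 x - c *\<^sub>R d0 x - c *\<^sub>R (u2 x + u3 x))
      \<le> H_norm M (\<lambda>x. e0 x + u1 x - c *\<^sub>R d1 x - c *\<^sub>R d0 x) + \<bar>c\<bar> * H_norm M (\<lambda>x. u2 x + u3 x)"
    using hn_diff[OF f3 l2_scale[OF u23]] by (simp add: hn_scale)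
  have i3: "\<bar>c\<bar> * H_norm M (\<lambda>x. u2 x + u3 x) \<le> \<bar>c\<bar> * (H_norm M u2 + H_norm M u3)"
    by (rule mult_left_mono[OF hn_add[OF L(5,6)]]) simp
  have i4: "H_norm M (\<lambda>x. e0 x + u1 x - c *\<^sub>R d1 x - c *\<^sub>R d0 x)
      \<le> H_norm M (\<lambda>x. e0 x + u1 x - c *\<^sub>R d1 x) + \<bar>c\<bar> * H_norm M d0"
    using hn_diff[OF f2 l2_scale[OF L(4)]] by (simp add: hn_scale)
  have i5: "H_norm M (\<lambda>x. e0 x + u1 x - c *\<^sub>R d1 x)
      \<le> H_norm M (\<lambda>x. e0 x + u1 x) + \<bar>c\<bar> * H_norm M d1"
    using hn_diff[OF f1 l2_scale[OF L(3)]] by (simp add: hn_scale)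
  have i6: "H_norm M (\<lambda>x. e0 x + u1 x) \<le> H_norm M e0 + H_norm M u1" by (rule hn_add[OF L(1,2)])
  show ?thesis using i1 i2 i3 i4 i5 i6 by linarith
qed
theorem mainTheorem1:
  fixes \<rho>0 :: "'a::euclidean_space measure"
    and \<phi> :: "'a measure \<Rightarrow> real"
    and G :: "('a \<Rightarrow> 'a) \<Rightarrow> ('a \<Rightarrow> 'a)"
    and X Xd Xdd :: "real \<Rightarrow> 'a \<Rightarrow> 'a"
    and Xs :: "nat \<Rightarrow> 'a \<Rightarrow> 'a"
    and T \<alpha> \<tau> :: real
  assumes rho0: "\<rho>0 \<in> P2"
    and grad: "is_frechet_gradient \<rho>0 \<phi> G"
    and bdd: "\<exists>B. \<forall>\<xi>\<in>L2space \<rho>0. \<bar>lift \<rho>0 \<phi> \<xi>\<bar> \<le> B"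
    and bdd_grad: "\<exists>B. \<forall>\<xi>\<in>L2space \<rho>0. H_norm \<rho>0 (G \<xi>) \<le> B"
    and lip: "bdd_above (lip_ratios \<rho>0 G)"
    and lip_pos: "Lip_const \<rho>0 G > 0"
    and X_in: "\<forall>t\<ge>0. X t \<in> L2space \<rho>0"
    and X_init: "H_norm \<rho>0 (\<lambda>x. X 0 x - x) = 0"
    and X_deriv: "\<forall>t\<ge>0. Xd t \<in> L2space \<rho>0 \<and> has_H_derivative \<rho>0 X (Xd t) t {0..}"
    and X_C1: "\<forall>t\<ge>0. H_continuous_at \<rho>0 Xd t {0..}"
    and X_ode: "\<forall>t\<ge>0. H_norm \<rho>0 (\<lambda>x. Xd t x + G (X t) x) = 0"
    and T_pos: "T > 0"
    and alpha: "0 < \<alpha>" "\<alpha> \<le> 1"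
    and Xdd: "\<forall>t\<in>{0..T}. Xdd t \<in> L2space \<rho>0 \<and> has_H_derivative \<rho>0 Xd (Xdd t) t {0..T}"
    and holder: "bdd_above (holder_ratios \<rho>0 T \<alpha> Xd Xdd)"
    and tau: "0 < \<tau>" "\<tau> \<le> 1 / Lip_const \<rho>0 G"
    and Xs0: "Xs 0 \<in> L2space \<rho>0"
    and Xs_step: "\<forall>n. Xs (Suc n) \<in> L2space \<rho>0 \<and>
        (\<forall>\<xi>\<in>L2space \<rho>0. trap_obj \<rho>0 \<phi> G \<tau> (Xs n) (Xs (Suc n)) \<le> trap_obj \<rho>0 \<phi> G \<tau> (Xs n) \<xi>)"
  shows "\<forall>n. real n * \<tau> \<le> T \<longrightarrow>
     W2 (distr \<rho>0 borel (X (real n * \<tau>))) (distr \<rho>0 borel (Xs n))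
        \<le> H_norm \<rho>0 (\<lambda>x. Xs n x - X (real n * \<tau>) x)
     \<and> H_norm \<rho>0 (\<lambda>x. Xs n x - X (real n * \<tau>) x)
        \<le> exp (2 * Lip_const \<rho>0 G * T) * H_norm \<rho>0 (\<lambda>x. Xs 0 x - x)
          + 2 * (L_alpha \<rho>0 T \<alpha> Xd Xdd / Lip_const \<rho>0 G)
              * (exp (2 * Lip_const \<rho>0 G * T) - 1) * \<tau> powr (1 + \<alpha>)"
proof -
  let ?L = "Lip_const \<rho>0 G"
  let ?K = "L_alpha \<rho>0 T \<alpha> Xd Xdd"
  let ?N = "H_norm \<rho>0"
  have P: "prob_space \<rho>0" and sb: "sets \<rho>0 = sets borel" using rho0 unfolding P2_def by auto
  have GL2: "\<forall>\<xi>\<in>L2space \<rho>0. G \<xi> \<in> L2space \<rho>0" using grad unfolding is_frechet_gradient_def by auto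
  have XsL: "Xs n \<in> L2space \<rho>0" for n using Xs0 Xs_step by (cases n) auto
  have XL: "X t \<in> L2space \<rho>0" if "t \<ge> 0" for t using X_in that by auto
  have XdL: "Xd t \<in> L2space \<rho>0" if "t \<ge> 0" for t using X_deriv that by auto
  have hold: "?N (\<lambda>x. Xd t x - Xd s x - (t - s) *\<^sub>R Xdd s x) \<le> ?K * \<bar>t - s\<bar> powr (1 + \<alpha>)"
    if t: "t \<in> {0..T}" and s: "s \<in> {0..T}" and ts: "t \<noteq> s" for t s
  proof -
    have "?N (\<lambda>x. Xd t x - Xd s x - (t - s) *\<^sub>R Xdd s x) / \<bar>t - s\<bar> powr (1 + \<alpha>) \<in> holder_ratios \<rho>0 T \<alpha> Xd Xdd"
      unfolding holder_ratios_def using t s ts by blast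
    then have "?N (\<lambda>x. Xd t x - Xd s x - (t - s) *\<^sub>R Xdd s x) / \<bar>t - s\<bar> powr (1 + \<alpha>) \<le> ?K"
      unfolding L_alpha_def using holder by (rule cSup_upper)
    moreover have "\<bar>t - s\<bar> powr (1 + \<alpha>) > 0" using ts by simp
    ultimately show ?thesis by (simp add: divide_le_eq mult.commute)
  qed
  have K0: "?K \<ge> 0"
  proof -
    have "?N (\<lambda>x. Xd T x - Xd 0 x - (T - 0) *\<^sub>R Xdd 0 x) / \<bar>T - 0\<bar> powr (1 + \<alpha>) \<in> holder_ratios \<rho>0 T \<alpha> Xd Xdd"
      unfolding holder_ratios_def using T_pos by fastforce
    then have "?N (\<lambda>x. Xd T x - Xd 0 x - (T - 0) *\<^sub>R Xdd 0 x) / \<bar>T - 0\<bar> powr (1 + \<alpha>) \<le> ?K"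
      unfolding L_alpha_def using holder by (rule cSup_upper)
    moreover have "?N (\<lambda>x. Xd T x - Xd 0 x - (T - 0) *\<^sub>R Xdd 0 x) / \<bar>T - 0\<bar> powr (1 + \<alpha>) \<ge> 0"
      by (simp add: hn_nonneg)
    ultimately show ?thesis by linarith
  qed
  have lipb: "?N (\<lambda>x. G a x - G b x) \<le> ?L * ?N (\<lambda>x. a x - b x)"
    if "a \<in> L2space \<rho>0" "b \<in> L2space \<rho>0" for a b
    by (rule lip_bound[OF P lip lip_pos GL2 that])
  have opt: "?N (\<lambda>x. Xs (Suc k) x - Xs k x + (\<tau>/2) *\<^sub>R (G (Xs (Suc k)) x + G (Xs k) x)) = 0" for k
    by (rule opt_cond[OF grad XsL XsL tau(1)]) (use Xs_step in auto)
  define E where "E k = ?N (\<lambda>x. Xs k x - X (real k * \<tau>) x)" for k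
  define r where "r = 3 / 2 * ?K * \<tau> powr (1 + \<alpha>) * \<tau>"
  have r0: "r \<ge> 0" unfolding r_def using K0 tau by simp
  have Lt: "?L * \<tau> \<le> 1" using tau lip_pos by (simp add: field_simps)
  have Lt': "\<tau> * ?L \<le> 1" using Lt by (simp add: mult.commute)
  have step: "E (Suc k) \<le> exp (2 * ?L * \<tau>) * E k + 2 * r" if kT: "real (Suc k) * \<tau> \<le> T" for k
  proof -
    define a where "a = real k * \<tau>"
    define b where "b = real (Suc k) * \<tau>"
    have a0: "a \<ge> 0" unfolding a_def using tau by simp
    have ba: "b - a = \<tau>" unfolding a_def b_def by (simp add: algebra_simps)
    have ab: "a < b" using ba tau by simp
    have bT: "b \<le> T" unfolding b_def using kT .
    have b0: "b \<ge> 0" using a0 ab by simp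
    have aT: "a \<in> {0..T}" using a0 ab bT by simp
    have XddL: "Xdd a \<in> L2space \<rho>0" using Xdd aT by auto
    have holda: "\<forall>t\<in>{a<..b}. ?N (\<lambda>x. Xd t x - Xd a x - (t - a) *\<^sub>R Xdd a x) \<le> ?K * \<bar>t - a\<bar> powr (1 + \<alpha>)"
    proof
      fix t assume t: "t \<in> {a<..b}"
      then have "t \<in> {0..T}" "t \<noteq> a" using a0 bT by auto
      from hold[OF this(1) aT this(2)] show "?N (\<lambda>x. Xd t x - Xd a x - (t - a) *\<^sub>R Xdd a x) \<le> ?K * \<bar>t - a\<bar> powr (1 + \<alpha>)" .
    qed
    have tr: "?N (\<lambda>x. X b x - X a x - ((b - a) / 2) *\<^sub>R (Xd a x + Xd b x))
           \<le> 3 / 2 * ?K * (b - a) powr (1 + \<alpha>) * (b - a)"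
      by (rule trunc[where Xdd=Xdd and a=a, OF X_in X_deriv XddL holda K0 a0 ab alpha(1)])
    define e0 where "e0 = (\<lambda>x. Xs k x - X a x)"
    define u1 where "u1 = (\<lambda>x. Xs (Suc k) x - Xs k x + (\<tau>/2) *\<^sub>R (G (Xs (Suc k)) x + G (Xs k) x))"
    define d1 where "d1 = (\<lambda>x. G (Xs (Suc k)) x - G (X b) x)"
    define d0 where "d0 = (\<lambda>x. G (Xs k) x - G (X a) x)"
    define u2 where "u2 = (\<lambda>x. Xd a x + G (X a) x)"
    define u3 where "u3 = (\<lambda>x. Xd b x + G (X b) x)"
    define R where "R = (\<lambda>x. X b x - X a x - (\<tau> / 2) *\<^sub>R (Xd a x + Xd b x))"
    have GXs: "G (Xs n) \<in> L2space \<rho>0" for n using GL2 XsL by auto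
    have GXa: "G (X a) \<in> L2space \<rho>0" and GXb: "G (X b) \<in> L2space \<rho>0" using GL2 XL a0 b0 by auto
    have Ls: "e0 \<in> L2space \<rho>0" "u1 \<in> L2space \<rho>0" "d1 \<in> L2space \<rho>0" "d0 \<in> L2space \<rho>0"
      "u2 \<in> L2space \<rho>0" "u3 \<in> L2space \<rho>0" "R \<in> L2space \<rho>0"
      unfolding e0_def u1_def d1_def d0_def u2_def u3_def R_def
      by (rule l2_diff[OF XsL XL[OF a0]],
          rule l2_add[OF l2_diff[OF XsL XsL] l2_scale[OF l2_add[OF GXs GXs]]],
          rule l2_diff[OF GXs GXb], rule l2_diff[OF GXs GXa],
          rule l2_add[OF XdL[OF a0] GXa], rule l2_add[OF XdL[OF b0] GXb],
          rule l2_diff[OF l2_diff[OF XL[OF b0] XL[OF a0]] l2_scale[OF l2_add[OF XdL[OF a0] XdL[OF b0]]]])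
    have ident: "(\<lambda>x. Xs (Suc k) x - X (real (Suc k) * \<tau>) x)
        = (\<lambda>x. e0 x + u1 x - (\<tau>/2) *\<^sub>R d1 x - (\<tau>/2) *\<^sub>R d0 x - (\<tau>/2) *\<^sub>R (u2 x + u3 x) - R x)"
      unfolding e0_def u1_def d1_def d0_def u2_def u3_def R_def b_def[symmetric]
      by (rule ext) (simp add: algebra_simps scaleR_add_right scaleR_diff_right)
    have nu1: "?N u1 = 0" unfolding u1_def by (rule opt)
    have nu2: "?N u2 = 0" unfolding u2_def using X_ode a0 by auto
    have nu3: "?N u3 = 0" unfolding u3_def using X_ode b0 by auto
    have ne0: "?N e0 = E k" unfolding e0_def E_def a_def ..
    have nd1: "?N d1 \<le> ?L * E (Suc k)" unfolding d1_def E_def b_def[symmetric]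
      by (rule lipb[OF XsL XL[OF b0]])
    have nd0: "?N d0 \<le> ?L * E k" unfolding d0_def E_def a_def[symmetric]
      by (rule lipb[OF XsL XL[OF a0]])
    have nR: "?N R \<le> r" using tr unfolding R_def r_def ba .
    have "E (Suc k) \<le> ?N e0 + ?N u1 + \<bar>\<tau>/2\<bar> * ?N d1 + \<bar>\<tau>/2\<bar> * ?N d0
       + \<bar>\<tau>/2\<bar> * (?N u2 + ?N u3) + ?N R"
      unfolding E_def ident by (rule tri7[OF Ls])
    also have "\<dots> \<le> E k + 0 + (\<tau>/2) * (?L * E (Suc k)) + (\<tau>/2) * (?L * E k) + (\<tau>/2) * (0 + 0) + r"
      unfolding nu1 nu2 nu3 ne0 using nd1 nd0 nR tau
      by (intro add_mono mult_left_mono order_refl) auto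
    finally have h: "E (Suc k) \<le> E k + (\<tau> * ?L / 2) * E (Suc k) + (\<tau> * ?L / 2) * E k + r"
      by (simp add: algebra_simps)
    have "E (Suc k) \<le> exp (4 * (\<tau> * ?L / 2)) * E k + 2 * r"
      by (rule rec_real[OF _ _ _ r0 h]) (use tau lip_pos Lt' in \<open>auto simp: E_def hn_nonneg\<close>)
    then show ?thesis by (simp add: algebra_simps)
  qed
  show ?thesis
  proof (intro allI impI conjI)
    fix n assume n: "real n * \<tau> \<le> T"
    show "W2 (distr \<rho>0 borel (X (real n * \<tau>))) (distr \<rho>0 borel (Xs n))
        \<le> ?N (\<lambda>x. Xs n x - X (real n * \<tau>) x)"
      by (rule w2_le[OF P sb XL XsL]) (use tau in simp)
    define p where "p = exp (2 * ?L * \<tau>)"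
    have p1: "p - 1 \<ge> 2 * ?L * \<tau>" unfolding p_def using exp_ge_add_one_self[of "2 * ?L * \<tau>"] by linarith
    have pgt: "p > 1" using p1 lip_pos tau by (smt (verit) mult_pos_pos)
    have gr: "E n \<le> p ^ n * E 0 + (2 * r) * (p ^ n - 1) / (p - 1)"
    proof (rule gron)
      fix k assume "k < n"
      then have "real (Suc k) * \<tau> \<le> T" using n tau
        by (smt (verit, best) of_nat_less_iff of_nat_Suc mult_right_mono Suc_leI of_nat_le_iff)
      then show "E (Suc k) \<le> p * E k + 2 * r" unfolding p_def by (rule step)
    qed (use pgt r0 in auto)
    have pn: "p ^ n = exp (2 * ?L * (real n * \<tau>))" unfolding p_def
      by (simp add: exp_of_nat_mult[symmetric] algebra_simps)
    have pnT: "p ^ n \<le> exp (2 * ?L * T)" unfolding pn using n lip_pos by simp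
    have pn1: "p ^ n \<ge> 1" using pgt by simp
    have E0b: "E 0 \<le> ?N (\<lambda>x. Xs 0 x - x)"
    proof -
      have idL: "(\<lambda>x. x) \<in> L2space \<rho>0" by (rule id_L2[OF rho0])
      have "E 0 = ?N (\<lambda>x. Xs 0 x - X 0 x)" unfolding E_def by simp
      also have "\<dots> \<le> ?N (\<lambda>x. Xs 0 x - x) + ?N (\<lambda>x. x - X 0 x)"
        by (rule hn_tri3[OF XsL idL XL]) simp
      also have "?N (\<lambda>x. x - X 0 x) = 0" using X_init hn_neg[of \<rho>0 "X 0" "\<lambda>x. x"] by simp
      finally show ?thesis by simp
    qed
    have t1: "p ^ n * E 0 \<le> exp (2 * ?L * T) * ?N (\<lambda>x. Xs 0 x - x)"
      using pnT E0b pn1 by (intro mult_mono) (auto simp: E_def hn_nonneg)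
    define Q where "Q = \<tau> powr (1 + \<alpha>)"
    have Q0: "Q > 0" unfolding Q_def using tau by simp
    have A0: "exp (2 * ?L * T) - 1 \<ge> 0" using lip_pos T_pos by simp
    have fr: "(p ^ n - 1) / (p - 1) \<le> (exp (2 * ?L * T) - 1) / (2 * ?L * \<tau>)"
    proof -
      have "(p ^ n - 1) / (p - 1) \<le> (p ^ n - 1) / (2 * ?L * \<tau>)"
        using p1 pn1 lip_pos tau pgt by (intro divide_left_mono) auto
      also have "\<dots> \<le> (exp (2 * ?L * T) - 1) / (2 * ?L * \<tau>)"
        using pnT lip_pos tau by (intro divide_right_mono) auto
      finally show ?thesis .
    qed
    have t2: "(2 * r) * (p ^ n - 1) / (p - 1) \<le> 2 * (?K / ?L) * (exp (2 * ?L * T) - 1) * \<tau> powr (1 + \<alpha>)"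
    proof -
      have "(2 * r) * (p ^ n - 1) / (p - 1) = (2 * r) * ((p ^ n - 1) / (p - 1))" by simp
      also have "\<dots> \<le> (2 * r) * ((exp (2 * ?L * T) - 1) / (2 * ?L * \<tau>))"
        using fr r0 by (intro mult_left_mono) auto
      also have "\<dots> = 3 / 2 * (?K / ?L) * (exp (2 * ?L * T) - 1) * Q"
        unfolding r_def Q_def using tau lip_pos by (simp add: field_simps)
      also have "\<dots> \<le> 2 * (?K / ?L) * (exp (2 * ?L * T) - 1) * Q"
        using K0 lip_pos A0 Q0 by (intro mult_right_mono) auto
      finally show ?thesis unfolding Q_def .
    qed
    show "?N (\<lambda>x. Xs n x - X (real n * \<tau>) x)
        \<le> exp (2 * ?L * T) * ?N (\<lambda>x. Xs 0 x - x)
          + 2 * (?K / ?L) * (exp (2 * ?L * T) - 1) * \<tau> powr (1 + \<alpha>)"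
      using gr t1 t2 unfolding E_def by linarith
  qed
qed

end
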